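(* Let $(\tilde\Theta^n_I)$ be a congruent family of covariant $n$-tensor fields on $\mathcal M_+(I)$, $I$ ranging over finite sets. Then there is a congruent family $(\tilde\Psi^n_I)$ of the form $(\tilde\Psi^n_I)_\mu=\sum_{\mathbf P\in\mathbf{Part}(n)}a_{\mathbf P}(\|\mu\|)(\tau^{\mathbf P}_I)_\mu$ with functions $a_{\mathbf P}:(0,\infty)\to\mathbb R$, such that $(\tilde\Theta^n_I-\tilde\Psi^n_I)_{\lambda c_I}=0$ for all finite sets $I$ and all $\lambda>0$.
   Context: $\mathbf{Part}(n)$ is the set of partitions of $\{1,\dots,n\}$. For a finite set $I$: $\mathcal S(I)=\{\sum_{i\in I}x_i\delta_i\}$, $\|\sum x_i\delta_i\|=\sum|x_i|$, $\mathcal M_+(I)=\{\sum\mu_i\delta_i:\mu_i>0\}$ (tangent space $\mathcal S(I)$), $c_I:=\frac1{|I|}\sum_i\delta_i$. A covariant $n$-tensor field on $\mathcal M_+(I)$ is a continuously varying family of $n$-multilinear forms on $\mathcal S(I)$. For $\mu=\sum\mu_i\delta_i$ and $V_k=\sum_iV_k^i\delta_i$, $(\tau^m_I)_\mu(V_1,\dots,V_m)=\sum_i\mu_i^{1-m}V_1^i\cdots V_m^i$, and for $\mathbf P=\{P_1,\dots,P_l\}$, $(\tau^{\mathbf P}_I)_\mu(V_1,\dots,V_n)=\prod_i(\tau^{|P_i|}_I)_\mu((V_j)_{j\in P_i})$. A Markov kernel $K:I\to\mathcal P(I')$ between finite sets is a stochastic matrix $K(i)=\sum_{i'}K^i_{i'}\delta_{i'}$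 with $K_*(\sum x_i\delta_i)=\sum_{i,i'}K^i_{i'}x_i\delta_{i'}$; it is congruent if there is a map $\kappa:I'\to I$ with $K^i_{i'}=0$ whenever $\kappa(i')\ne i$. A family is congruent if $(\Theta_{I'})_{K_*\mu}(K_*V_1,\dots,K_*V_n)=(\Theta_I)_\mu(V_1,\dots,V_n)$ for every congruent Markov kernel $K:I\to\mathcal P(I')$ between finite sets with $K_*(\mathcal M_+(I))\subset\mathcal M_+(I')$. *)

theory Defs
  imports "HOL-Analysis.Analysis" "HOL-Library.Disjoint_Sets"
begin

text \<open>Finite sets I are finite nonempty subsets of nat. Signed measures S(I) are
functions nat => real vanishing outside I; the topology on M_+(I) is the
(product) topology of nat => real. Tangent vectors V_1..V_n are a list of
length n (0-based indices).\<close>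

definition Sig :: "nat set \<Rightarrow> (nat \<Rightarrow> real) set" where
  "Sig I = {x. \<forall>i. i \<notin> I \<longrightarrow> x i = 0}"

definition Mplus :: "nat set \<Rightarrow> (nat \<Rightarrow> real) set" where
  "Mplus I = {\<mu> \<in> Sig I. \<forall>i\<in>I. \<mu> i > 0}"

definition norm1 :: "nat set \<Rightarrow> (nat \<Rightarrow> real) \<Rightarrow> real" where
  "norm1 I x = (\<Sum>i\<in>I. \<bar>x i\<bar>)"

definition cI :: "nat set \<Rightarrow> nat \<Rightarrow> real" where
  "cI I = (\<lambda>i. if i \<in> I then 1 / real (card I) else 0)"

definition Part :: "nat \<Rightarrow> nat set set set" where
  "Part n = {P. partition_on {0..<n} P}"

definition tau_m :: "nat set \<Rightarrow> nat \<Rightarrow> (nat \<Rightarrow> real) \<Rightarrow> (nat \<Rightarrow> real) list \<Rightarrow> real" where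
  "tau_m I m \<mu> W = (\<Sum>i\<in>I. \<mu> i powr (1 - real m) * (\<Prod>k<length W. (W ! k) i))"

definition tauP :: "nat set \<Rightarrow> nat set set \<Rightarrow> (nat \<Rightarrow> real) \<Rightarrow> (nat \<Rightarrow> real) list \<Rightarrow> real" where
  "tauP I P \<mu> V = (\<Prod>B\<in>P. tau_m I (card B) \<mu> (map (\<lambda>j. V ! j) (sorted_list_of_set B)))"

definition congruent_markov_kernel :: "nat set \<Rightarrow> nat set \<Rightarrow> (nat \<Rightarrow> nat \<Rightarrow> real) \<Rightarrow> bool" where
  "congruent_markov_kernel I I' K \<longleftrightarrow>
     (\<forall>i\<in>I. \<forall>i'\<in>I'. K i i' \<ge> 0) \<and> (\<forall>i\<in>I. (\<Sum>i'\<in>I'. K i i') = 1) \<and>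
     (\<exists>\<kappa>. (\<forall>i'\<in>I'. \<kappa> i' \<in> I) \<and> (\<forall>i\<in>I. \<forall>i'\<in>I'. \<kappa> i' \<noteq> i \<longrightarrow> K i i' = 0))"

definition push :: "nat set \<Rightarrow> nat set \<Rightarrow> (nat \<Rightarrow> nat \<Rightarrow> real) \<Rightarrow> (nat \<Rightarrow> real) \<Rightarrow> (nat \<Rightarrow> real)" where
  "push I I' K x = (\<lambda>i'. if i' \<in> I' then (\<Sum>i\<in>I. K i i' * x i) else 0)"

definition congruent_family ::
  "nat \<Rightarrow> (nat set \<Rightarrow> (nat \<Rightarrow> real) \<Rightarrow> (nat \<Rightarrow> real) list \<Rightarrow> real) \<Rightarrow> bool" where
  "congruent_family n \<Theta> \<longleftrightarrow>
    (\<forall>I I' K. finite I \<and> I \<noteq> {} \<and> finite I' \<and> I' \<noteq> {} \<and> congruent_markov_kernel I I' K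
       \<and> push I I' K ` Mplus I \<subseteq> Mplus I' \<longrightarrow>
       (\<forall>\<mu>\<in>Mplus I. \<forall>V. length V = n \<and> set V \<subseteq> Sig I \<longrightarrow>
          \<Theta> I' (push I I' K \<mu>) (map (push I I' K) V) = \<Theta> I \<mu> V))"

definition covariant_tensor_field ::
  "nat \<Rightarrow> nat set \<Rightarrow> ((nat \<Rightarrow> real) \<Rightarrow> (nat \<Rightarrow> real) list \<Rightarrow> real) \<Rightarrow> bool" where
  "covariant_tensor_field n I T \<longleftrightarrow>
    (\<forall>\<mu>\<in>Mplus I. \<forall>V. length V = n \<and> set V \<subseteq> Sig I \<longrightarrow>
       (\<forall>j<n. \<forall>x\<in>Sig I. \<forall>y\<in>Sig I. \<forall>c::real.
          T \<mu> (V[j := (\<lambda>i. c * x i + y i)]) = c * T \<mu> (V[j := x]) + T \<mu> (V[j := y]))) \<and>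
    (\<forall>V. length V = n \<and> set V \<subseteq> Sig I \<longrightarrow> continuous_on (Mplus I) (\<lambda>\<mu>. T \<mu> V))"

end

theory Submission
  imports Defs
begin

definition refines :: "nat set set \<Rightarrow> nat set set \<Rightarrow> bool" where
  "refines P Q \<longleftrightarrow> (\<forall>B\<in>P. \<exists>C\<in>Q. B \<subseteq> C)"

definition kerpart :: "nat \<Rightarrow> (nat \<Rightarrow> nat) \<Rightarrow> nat set set" where
  "kerpart n \<iota> = (\<lambda>j. {k \<in> {0..<n}. \<iota> k = \<iota> j}) ` {0..<n}"

lemma part_unique: "partition_on A P \<Longrightarrow> p \<in> P \<Longrightarrow> q \<in> P \<Longrightarrow> x \<in> p \<Longrightarrow> x \<in> q \<Longrightarrow> p = q"
  unfolding partition_on_def disjoint_def by blast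

lemma finite_Part: "finite (Part n)"
proof -
  have "Part n \<subseteq> Pow (Pow {0..<n})"
    unfolding Part_def partition_on_def by auto
  then show ?thesis by (rule finite_subset) auto
qed

lemma card_part_le: assumes "partition_on A P" "finite A" shows "card P \<le> card A"
proof -
  define f where "f B = (SOME x. x \<in> B)" for B :: "'a set"
  have fB: "B \<in> P \<Longrightarrow> f B \<in> B" for B
  proof -
    assume "B \<in> P"
    then have "B \<noteq> {}" using partition_onD3[OF assms(1)] by auto
    then show ?thesis unfolding f_def by (simp add: some_in_eq)
  qed
  have "inj_on f P"
  proof (rule inj_onI)
    fix B B' assume "B \<in> P" "B' \<in> P" "f B = f B'"
    then show "B = B'" using fB[of B] fB[of B'] part_unique[OF assms(1), of B B' "f B"] by simp
  qed
  moreover have "f ` P \<subseteq> A" using fB partition_onD1[OF assms(1)] by blast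
  ultimately show ?thesis using assms(2) by (meson card_inj_on_le)
qed

lemma kerpart_Part: "kerpart n \<iota> \<in> Part n"
  unfolding Part_def kerpart_def mem_Collect_eq
proof (rule partition_onI)
  show "\<Union> ((\<lambda>j. {k \<in> {0..<n}. \<iota> k = \<iota> j}) ` {0..<n}) = {0..<n}"
  proof
    show "\<Union> ((\<lambda>j. {k \<in> {0..<n}. \<iota> k = \<iota> j}) ` {0..<n}) \<subseteq> {0..<n}" by auto
    show "{0..<n} \<subseteq> \<Union> ((\<lambda>j. {k \<in> {0..<n}. \<iota> k = \<iota> j}) ` {0..<n})"
    proof
      fix x assume "x \<in> {0..<n}"
      then have "x \<in> {k \<in> {0..<n}. \<iota> k = \<iota> x}" by simp
      then show "x \<in> \<Union> ((\<lambda>j. {k \<in> {0..<n}. \<iota> k = \<iota> j}) ` {0..<n})"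
        using \<open>x \<in> {0..<n}\<close> by (rule UN_I[rotated])
    qed
  qed
  show "{} \<notin> (\<lambda>j. {k \<in> {0..<n}. \<iota> k = \<iota> j}) ` {0..<n}"
  proof
    assume "{} \<in> (\<lambda>j. {k \<in> {0..<n}. \<iota> k = \<iota> j}) ` {0..<n}"
    then obtain j where j: "j \<in> {0..<n}" and e: "{} = {k \<in> {0..<n}. \<iota> k = \<iota> j}" by (rule imageE)
    have "j \<in> {k \<in> {0..<n}. \<iota> k = \<iota> j}" using j by simp
    then show False unfolding e[symmetric] by simp
  qed
  fix p q assume "p \<in> (\<lambda>j. {k \<in> {0..<n}. \<iota> k = \<iota> j}) ` {0..<n}"
    "q \<in> (\<lambda>j. {k \<in> {0..<n}. \<iota> k = \<iota> j}) ` {0..<n}" and pq: "p \<noteq> q"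
  then obtain a b where ab: "p = {k \<in> {0..<n}. \<iota> k = \<iota> a}" "q = {k \<in> {0..<n}. \<iota> k = \<iota> b}"
    by (meson imageE)
  have "\<iota> a \<noteq> \<iota> b"
  proof
    assume "\<iota> a = \<iota> b"
    then have "p = q" unfolding ab by simp
    then show False using pq by simp
  qed
  then show "disjnt p q" unfolding disjnt_def ab by auto
qed

lemma kerpart_pattern:
  assumes eq: "kerpart n \<iota> = kerpart n \<iota>'" and jn: "j < n" and kn: "k < n"
  shows "\<iota> j = \<iota> k \<longleftrightarrow> \<iota>' j = \<iota>' k"
proof -
  have "{l \<in> {0..<n}. \<iota> l = \<iota> j} \<in> kerpart n \<iota>"
    unfolding kerpart_def using jn by (intro image_eqI[where x=j]) auto
  then have "{l \<in> {0..<n}. \<iota> l = \<iota> j} \<in> kerpart n \<iota>'" by (simp only: eq)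
  then obtain j' where j': "{l \<in> {0..<n}. \<iota> l = \<iota> j} = {l \<in> {0..<n}. \<iota>' l = \<iota>' j'}"
    unfolding kerpart_def by (rule imageE)
  have "j \<in> {l \<in> {0..<n}. \<iota> l = \<iota> j}" using jn by simp
  then have "j \<in> {l \<in> {0..<n}. \<iota>' l = \<iota>' j'}" by (simp only: j')
  then have jj: "\<iota>' j' = \<iota>' j" by simp
  have "k \<in> {l \<in> {0..<n}. \<iota> l = \<iota> j} \<longleftrightarrow> k \<in> {l \<in> {0..<n}. \<iota>' l = \<iota>' j'}"
    by (simp only: j')
  then have h: "(\<iota> k = \<iota> j) = (\<iota>' k = \<iota>' j')" using kn by simp
  show ?thesis unfolding jj[symmetric] by (metis h)
qed

lemma kerpart_exists:
  assumes Q: "Q \<in> Part n" and fI: "finite I" and c: "card Q \<le> card I"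
  shows "\<exists>\<iota>. (\<forall>k<n. \<iota> k \<in> I) \<and> kerpart n \<iota> = Q"
proof -
  have pQ: "partition_on {0..<n} Q" using Q unfolding Part_def by simp
  have fQ: "finite Q" using partition_onD1[OF pQ] by (metis finite_UnionD finite_atLeastLessThan)
  obtain g where g: "g ` Q \<subseteq> I" "inj_on g Q" using card_le_inj[OF fQ fI c] by blast
  define blk where "blk k = (THE B. B \<in> Q \<and> k \<in> B)" for k
  have blk: "k < n \<Longrightarrow> blk k \<in> Q \<and> k \<in> blk k" for k
  proof -
    assume "k < n"
    then obtain B where "B \<in> Q" "k \<in> B" using partition_onD1[OF pQ] by (metis UnionE atLeastLessThan_iff le0)
    then have "\<exists>!B. B \<in> Q \<and> k \<in> B" using part_unique[OF pQ, of _ _ k] by (intro ex1I) auto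
    then show ?thesis unfolding blk_def by (rule theI')
  qed
  have blkeq: "blk k = blk j \<longleftrightarrow> k \<in> blk j" if "k < n" "j < n" for k j
  proof
    show "blk k = blk j \<Longrightarrow> k \<in> blk j" using blk[OF that(1)] by simp
    show "k \<in> blk j \<Longrightarrow> blk k = blk j"
      using part_unique[OF pQ, of "blk k" "blk j" k] blk[OF that(1)] blk[OF that(2)] by blast
  qed
  define \<iota> where "\<iota> k = g (blk k)" for k
  have "\<forall>k<n. \<iota> k \<in> I" using g blk unfolding \<iota>_def by auto
  moreover have "kerpart n \<iota> = Q"
  proof -
    have e: "j < n \<Longrightarrow> {k \<in> {0..<n}. \<iota> k = \<iota> j} = blk j" for j
    proof -
      assume j: "j < n"
      have "\<iota> k = \<iota> j \<longleftrightarrow> k \<in> blk j" if k: "k < n" for k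
      proof -
        have "\<iota> k = \<iota> j \<longleftrightarrow> blk k = blk j"
          unfolding \<iota>_def using inj_on_eq_iff[OF g(2)] blk[OF k] blk[OF j] by blast
        then show ?thesis using blkeq[OF k j] by simp
      qed
      moreover have "blk j \<subseteq> {0..<n}" using blk[OF j] pQ unfolding partition_on_def by auto
      ultimately show ?thesis by auto
    qed
    have "kerpart n \<iota> = blk ` {0..<n}" unfolding kerpart_def by (rule image_cong[OF refl]) (use e in simp)
    also have "\<dots> = Q"
    proof
      show "blk ` {0..<n} \<subseteq> Q" using blk by auto
      show "Q \<subseteq> blk ` {0..<n}"
      proof
        fix B assume B: "B \<in> Q"
        then obtain k where k: "k \<in> B" using partition_onD3[OF pQ] by (metis all_not_in_conv)
        then have kn: "k < n" using B partition_onD1[OF pQ] by auto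
        then have "blk k = B" using part_unique[OF pQ, of "blk k" B k] blk[OF kn] B k by blast
        then show "B \<in> blk ` {0..<n}" using kn by auto
      qed
    qed
    finally show ?thesis .
  qed
  ultimately show ?thesis by blast
qed


lemma refines_card:
  assumes P: "P \<in> Part n" and Q: "Q \<in> Part n" and r: "refines P Q" and ne: "P \<noteq> Q"
  shows "card Q < card P"
proof -
  have pP: "partition_on {0..<n} P" and pQ: "partition_on {0..<n} Q" using P Q unfolding Part_def by auto
  have fP: "finite P" using partition_onD1[OF pP] by (metis finite_UnionD finite_atLeastLessThan)
  define g where "g B = (THE C. C \<in> Q \<and> B \<subseteq> C)" for B
  have g: "B \<in> P \<Longrightarrow> g B \<in> Q \<and> B \<subseteq> g B" for B
  proof -
    assume B: "B \<in> P"
    then obtain C where C: "C \<in> Q" "B \<subseteq> C" using r unfolding refines_def by blast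
    obtain x where x: "x \<in> B" using B partition_onD3[OF pP] by (metis all_not_in_conv)
    have "\<exists>!C. C \<in> Q \<and> B \<subseteq> C" using C x part_unique[OF pQ, of _ _ x] by (intro ex1I) auto
    then show ?thesis unfolding g_def by (rule theI')
  qed
  have img: "g ` P = Q"
  proof
    show "g ` P \<subseteq> Q" using g by auto
    show "Q \<subseteq> g ` P"
    proof
      fix C assume C: "C \<in> Q"
      then obtain x where x: "x \<in> C" using partition_onD3[OF pQ] by (metis all_not_in_conv)
      then have "x \<in> {0..<n}" using C partition_onD1[OF pQ] by auto
      then obtain B where B: "B \<in> P" "x \<in> B" using partition_onD1[OF pP] by auto
      then have "g B = C" using g[OF B(1)] C x part_unique[OF pQ, of "g B" C x] by blast
      then show "C \<in> g ` P" using B by auto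
    qed
  qed
  have le: "card Q \<le> card P" using img card_image_le[OF fP] by metis
  show ?thesis
  proof (rule ccontr)
    assume "\<not> card Q < card P"
    then have "card (g ` P) = card P" using le img by simp
    then have inj: "inj_on g P" using eq_card_imp_inj_on[OF fP] by blast
    have gB: "B \<in> P \<Longrightarrow> g B = B" for B
    proof -
      assume B: "B \<in> P"
      have "g B \<subseteq> B"
      proof
        fix x assume x: "x \<in> g B"
        then have "x \<in> {0..<n}" using g[OF B] partition_onD1[OF pQ] by auto
        then obtain B' where B': "B' \<in> P" "x \<in> B'" using partition_onD1[OF pP] by auto
        then have "g B' = g B" using g[OF B'(1)] g[OF B] x part_unique[OF pQ, of "g B'" "g B" x] by blast
        then have "B' = B" using inj_on_eq_iff[OF inj B'(1) B] by simp
        then show "x \<in> B" using B' by simp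
      qed
      then show ?thesis using g[OF B] by blast
    qed
    then have "g ` P = P" by simp
    then have "Q = P" using img by simp
    then show False using ne by simp
  qed
qed

lemma tri_uniq:
  fixes S :: "'a set" and R :: "'a \<Rightarrow> 'a \<Rightarrow> bool" and \<rho> :: "'a \<Rightarrow> nat" and w d :: "'a \<Rightarrow> real"
  assumes fin: "finite S" and refl: "\<forall>Q\<in>S. R Q Q"
    and mono: "\<forall>P\<in>S. \<forall>Q\<in>S. R P Q \<and> P \<noteq> Q \<longrightarrow> \<rho> Q < \<rho> P"
    and w: "\<forall>Q\<in>S. w Q \<noteq> 0" and h: "\<forall>Q\<in>S. (\<Sum>P\<in>{P\<in>S. R P Q}. d P * w P) = 0"
  shows "\<forall>Q\<in>S. d Q = 0"
proof -
  define M where "M = Max (\<rho> ` S)"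
  have bound: "P \<in> S \<Longrightarrow> \<rho> P \<le> M" for P using fin by (simp add: M_def)
  have main: "Q \<in> S \<longrightarrow> d Q = 0" for Q
  proof (induction Q rule: measure_induct_rule[where f="\<lambda>Q. M - \<rho> Q"])
    case (less Q)
    show ?case
    proof
      assume Q: "Q \<in> S"
      have z: "d P * w P = 0" if "P \<in> {P\<in>S. R P Q} - {Q}" for P
      proof -
        have P: "P\<in>S" "R P Q" "P \<noteq> Q" using that by auto
        then have "\<rho> Q < \<rho> P" using mono Q by blast
        then have "M - \<rho> P < M - \<rho> Q" using bound[OF P(1)] by linarith
        then have "d P = 0" using less P(1) by blast
        then show ?thesis by simp
      qed
      have "(\<Sum>P\<in>{P\<in>S. R P Q}. d P * w P) = d Q * w Q + (\<Sum>P\<in>{P\<in>S. R P Q} - {Q}. d P * w P)"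
        using fin Q refl by (subst sum.remove[of _ Q]) auto
      also have "\<dots> = d Q * w Q"
      proof -
        have "(\<Sum>P\<in>{P\<in>S. R P Q} - {Q}. d P * w P) = 0" by (rule sum.neutral) (use z in blast)
        then show ?thesis by simp
      qed
      finally have "d Q * w Q = 0" using h Q by simp
      then show "d Q = 0" using w Q by simp
    qed
  qed
  then show ?thesis by blast
qed

lemma tri_exists:
  fixes S :: "'a set" and R :: "'a \<Rightarrow> 'a \<Rightarrow> bool" and \<rho> :: "'a \<Rightarrow> nat" and w f :: "'a \<Rightarrow> real"
  assumes fin: "finite S" and refl: "\<forall>Q\<in>S. R Q Q"
    and mono: "\<forall>P\<in>S. \<forall>Q\<in>S. R P Q \<and> P \<noteq> Q \<longrightarrow> \<rho> Q < \<rho> P"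
    and w: "\<forall>Q\<in>S. w Q \<noteq> 0"
  shows "\<exists>b. \<forall>Q\<in>S. f Q = (\<Sum>P\<in>{P\<in>S. R P Q}. b P * w P)"
proof -
  define M where "M = Max (\<rho> ` S)"
  have bound: "P \<in> S \<Longrightarrow> \<rho> P \<le> M" for P using fin by (simp add: M_def)
  have step: "\<exists>b. \<forall>Q\<in>S. M < \<rho> Q + k \<longrightarrow> f Q = (\<Sum>P\<in>{P\<in>S. R P Q}. b P * w P)" for k
  proof (induction k)
    case 0
    show ?case using bound by (metis add.right_neutral not_less)
  next
    case (Suc k)
    then obtain b where b: "\<forall>Q\<in>S. M < \<rho> Q + k \<longrightarrow> f Q = (\<Sum>P\<in>{P\<in>S. R P Q}. b P * w P)" by blast
    define b' where "b' Q = (if Q \<in> S \<and> \<rho> Q + k = M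
        then (f Q - (\<Sum>P\<in>{P\<in>S. R P Q} - {Q}. b P * w P)) / w Q else b Q)" for Q
    have same: "b' P = b P" if "P \<in> S" "M < \<rho> P + k" for P using that unfolding b'_def by auto
    show ?case
    proof (intro exI ballI impI)
      fix Q assume Q: "Q \<in> S" and Qk: "M < \<rho> Q + Suc k"
      have up: "M < \<rho> P + k" if "P \<in> {P\<in>S. R P Q} - {Q}" for P
      proof -
        have "\<rho> Q < \<rho> P" using that mono Q by blast
        then show ?thesis using Qk by linarith
      qed
      have rest: "(\<Sum>P\<in>{P\<in>S. R P Q} - {Q}. b' P * w P) = (\<Sum>P\<in>{P\<in>S. R P Q} - {Q}. b P * w P)"
        by (rule sum.cong) (use same up in auto)
      have split: "(\<Sum>P\<in>{P\<in>S. R P Q}. g P) = g Q + (\<Sum>P\<in>{P\<in>S. R P Q} - {Q}. g P)" for g :: "'a \<Rightarrow> real"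
        using fin Q refl by (subst sum.remove[of _ Q]) auto
      show "f Q = (\<Sum>P\<in>{P\<in>S. R P Q}. b' P * w P)"
      proof (cases "M < \<rho> Q + k")
        case True
        then have "b' Q = b Q" using same Q by blast
        then show ?thesis using b Q True split[of "\<lambda>P. b' P * w P"] split[of "\<lambda>P. b P * w P"] rest by simp
      next
        case False
        then have eq: "\<rho> Q + k = M" using Qk by linarith
        then have "b' Q * w Q = f Q - (\<Sum>P\<in>{P\<in>S. R P Q} - {Q}. b P * w P)"
          unfolding b'_def using Q w by simp
        then show ?thesis using split[of "\<lambda>P. b' P * w P"] rest by simp
      qed
    qed
  qed
  obtain b where "\<forall>Q\<in>S. M < \<rho> Q + Suc M \<longrightarrow> f Q = (\<Sum>P\<in>{P\<in>S. R P Q}. b P * w P)"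
    using step by blast
  then show ?thesis by auto
qed

definition dlt :: "nat \<Rightarrow> nat \<Rightarrow> real" where "dlt i = (\<lambda>x. if x = i then 1 else 0)"

definition bas :: "nat \<Rightarrow> (nat \<Rightarrow> nat) \<Rightarrow> (nat \<Rightarrow> real) list" where
  "bas n \<iota> = map (\<lambda>k. dlt (\<iota> k)) [0..<n]"

definition mlin :: "nat \<Rightarrow> nat set \<Rightarrow> ((nat \<Rightarrow> real) list \<Rightarrow> real) \<Rightarrow> bool" where
  "mlin n I T \<longleftrightarrow> (\<forall>V. length V = n \<and> set V \<subseteq> Sig I \<longrightarrow>
     (\<forall>j<n. \<forall>x\<in>Sig I. \<forall>y\<in>Sig I. \<forall>c::real.
        T (V[j := (\<lambda>i. c * x i + y i)]) = c * T (V[j := x]) + T (V[j := y])))"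

lemma dlt_Sig: "i \<in> I \<Longrightarrow> dlt i \<in> Sig I"
  unfolding dlt_def Sig_def by auto

lemma zero_Sig: "(\<lambda>_. 0) \<in> Sig I" unfolding Sig_def by simp

lemma mlin_D: "mlin n I T \<Longrightarrow> length V = n \<Longrightarrow> set V \<subseteq> Sig I \<Longrightarrow> j < n \<Longrightarrow> x \<in> Sig I \<Longrightarrow> y \<in> Sig I \<Longrightarrow>
   T (V[j := (\<lambda>i. c * x i + y i)]) = c * T (V[j := x]) + T (V[j := y])"
  unfolding mlin_def by blast

lemma mlin_zero:
  assumes "mlin n I T" "length V = n" "set V \<subseteq> Sig I" "j < n"
  shows "T (V[j := (\<lambda>_. 0)]) = 0"
proof -
  have "T (V[j := (\<lambda>i. 1 * (\<lambda>_. 0) i + (\<lambda>_. 0) i)]) = 1 * T (V[j := (\<lambda>_. 0)]) + T (V[j := (\<lambda>_. 0)])"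
    by (rule mlin_D[OF assms zero_Sig zero_Sig])
  then show ?thesis by simp
qed

lemma mlin_sum:
  assumes "mlin n I T" "length V = n" "set V \<subseteq> Sig I" "j < n" "finite A" "\<forall>a\<in>A. g a \<in> Sig I"
  shows "T (V[j := (\<lambda>x. \<Sum>a\<in>A. c a * g a x)]) = (\<Sum>a\<in>A. c a * T (V[j := g a]))"
  using assms(5,6)
proof (induction A rule: finite_induct)
  case empty
  then show ?case using mlin_zero[OF assms(1-4)] by simp
next
  case (insert a A)
  have yS: "(\<lambda>x. \<Sum>a\<in>A. c a * g a x) \<in> Sig I"
    using insert.prems unfolding Sig_def by auto
  have gS: "g a \<in> Sig I" using insert.prems by simp
  have "T (V[j := (\<lambda>i. c a * g a i + (\<lambda>x. \<Sum>a\<in>A. c a * g a x) i)])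
      = c a * T (V[j := g a]) + T (V[j := (\<lambda>x. \<Sum>a\<in>A. c a * g a x)])"
    by (rule mlin_D[OF assms(1-4) gS yS])
  moreover have "(\<lambda>x. \<Sum>a\<in>insert a A. c a * g a x) = (\<lambda>i. c a * g a i + (\<lambda>x. \<Sum>a\<in>A. c a * g a x) i)"
    using insert.hyps by simp
  ultimately show ?case using insert.hyps insert.IH insert.prems by simp
qed

lemma Sig_expand:
  assumes "finite I" "v \<in> Sig I"
  shows "v = (\<lambda>x. \<Sum>i\<in>I. v i * dlt i x)"
proof
  fix x
  show "v x = (\<Sum>i\<in>I. v i * dlt i x)"
  proof (cases "x \<in> I")
    case True
    have "(\<Sum>i\<in>I. v i * dlt i x) = (\<Sum>i\<in>I. if i = x then v x else 0)"
      by (rule sum.cong) (auto simp: dlt_def)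
    also have "\<dots> = v x" using True assms(1) by simp
    finally show ?thesis by simp
  next
    case False
    then have "v x = 0" using assms(2) unfolding Sig_def by auto
    moreover have "(\<Sum>i\<in>I. v i * dlt i x) = 0"
      by (rule sum.neutral) (use False in \<open>auto simp: dlt_def\<close>)
    ultimately show ?thesis by simp
  qed
qed

lemma agree:
  assumes fI: "finite I" and M1: "mlin n I T1" and M2: "mlin n I T2"
    and b: "\<forall>\<iota>. (\<forall>k<n. \<iota> k \<in> I) \<longrightarrow> T1 (bas n \<iota>) = T2 (bas n \<iota>)"
    and V: "length V = n" "set V \<subseteq> Sig I"
  shows "T1 V = T2 V"
proof -
  have claim: "\<forall>V. length V = n \<and> set V \<subseteq> Sig I \<and> (\<forall>k. m \<le> k \<and> k < n \<longrightarrow> (\<exists>i\<in>I. V!k = dlt i))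
      \<longrightarrow> T1 V = T2 V" for m
  proof (induction m)
    case 0
    show ?case
    proof (intro allI impI)
      fix V assume H: "length V = n \<and> set V \<subseteq> Sig I \<and> (\<forall>k. 0 \<le> k \<and> k < n \<longrightarrow> (\<exists>i\<in>I. V!k = dlt i))"
      define \<iota> where "\<iota> k = (SOME i. i \<in> I \<and> V!k = dlt i)" for k
      have \<iota>: "\<iota> k \<in> I \<and> V!k = dlt (\<iota> k)" if "k < n" for k
        unfolding \<iota>_def by (rule someI_ex) (use H that in blast)
      have "V = bas n \<iota>"
        by (rule nth_equalityI) (use H \<iota> in \<open>auto simp: bas_def\<close>)
      then show "T1 V = T2 V" using b \<iota> by simp
    qed
  next
    case (Suc m)
    show ?case
    proof (intro allI impI)
      fix V assume H: "length V = n \<and> set V \<subseteq> Sig I \<and> (\<forall>k. Suc m \<le> k \<and> k < n \<longrightarrow> (\<exists>i\<in>I. V!k = dlt i))"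
      show "T1 V = T2 V"
      proof (cases "m < n")
        case False
        then show ?thesis using Suc.IH H by auto
      next
        case True
        have vS: "V!m \<in> Sig I" using H True by (metis nth_mem subsetD)
        have upd: "V = V[m := (\<lambda>x. \<Sum>i\<in>I. (V!m) i * dlt i x)]"
          using Sig_expand[OF fI vS] by simp
        have IHu: "T1 (V[m := dlt i]) = T2 (V[m := dlt i])" if i: "i \<in> I" for i
        proof -
          have "length (V[m := dlt i]) = n" using H by simp
          moreover have "set (V[m := dlt i]) \<subseteq> Sig I"
            using H dlt_Sig[OF i] set_update_subset_insert by (metis insert_subset order_trans)
          moreover have "\<forall>k. m \<le> k \<and> k < n \<longrightarrow> (\<exists>i'\<in>I. V[m := dlt i]!k = dlt i')"
          proof (intro allI impI)
            fix k assume k: "m \<le> k \<and> k < n"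
            show "\<exists>i'\<in>I. V[m := dlt i]!k = dlt i'"
            proof (cases "k = m")
              case True then show ?thesis using i H k by auto
            next
              case False then show ?thesis using k H by auto
            qed
          qed
          ultimately show ?thesis using Suc.IH by blast
        qed
        have dS: "\<forall>i\<in>I. dlt i \<in> Sig I" using dlt_Sig by blast
        have "T1 V = (\<Sum>i\<in>I. (V!m) i * T1 (V[m := dlt i]))"
          using mlin_sum[OF M1 _ _ True fI dS, of V "\<lambda>i. (V!m) i"] H upd by simp
        also have "\<dots> = (\<Sum>i\<in>I. (V!m) i * T2 (V[m := dlt i]))" using IHu by simp
        also have "\<dots> = T2 V"
          using mlin_sum[OF M2 _ _ True fI dS, of V "\<lambda>i. (V!m) i"] H upd by simp
        finally show ?thesis .
      qed
    qed
  qed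
  show ?thesis using claim[of n] V by auto
qed

lemma tau_block:
  assumes "finite B"
  shows "tau_m I (card B) \<mu> (map (\<lambda>j. V ! j) (sorted_list_of_set B))
       = (\<Sum>i\<in>I. \<mu> i powr (1 - real (card B)) * (\<Prod>j\<in>B. (V!j) i))"
proof -
  define xs where "xs = sorted_list_of_set B"
  have len: "length xs = card B" unfolding xs_def by simp
  have bij: "bij_betw ((!) xs) {..<card B} B"
    by (rule bij_betw_nth) (use assms len in \<open>auto simp: xs_def\<close>)
  have "(\<Prod>k<card B. (map (\<lambda>j. V ! j) xs ! k) i) = (\<Prod>j\<in>B. (V!j) i)" for i
  proof -
    have "(\<Prod>k<card B. (map (\<lambda>j. V ! j) xs ! k) i) = (\<Prod>k<card B. (V ! (xs ! k)) i)"
      by (rule prod.cong) (use len in auto)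
    also have "\<dots> = (\<Prod>j\<in>B. (V!j) i)"
      by (rule prod.reindex_bij_betw[OF bij])
    finally show ?thesis .
  qed
  then show ?thesis unfolding tau_m_def xs_def[symmetric] using len by simp
qed

lemma Part_finite_blocks: "P \<in> Part n \<Longrightarrow> B \<in> P \<Longrightarrow> finite B \<and> B \<subseteq> {0..<n}"
  unfolding Part_def partition_on_def by (auto intro: finite_subset)

lemma tauP_formula:
  assumes "P \<in> Part n"
  shows "tauP I P \<mu> V = (\<Prod>B\<in>P. \<Sum>i\<in>I. \<mu> i powr (1 - real (card B)) * (\<Prod>j\<in>B. (V!j) i))"
  unfolding tauP_def by (rule prod.cong) (use tau_block Part_finite_blocks[OF assms] in auto)

lemma kern_push:
  assumes fI: "finite I" and k1: "\<forall>i'\<in>I'. \<kappa> i' \<in> I" and k2: "\<forall>i\<in>I. \<forall>i'\<in>I'. \<kappa> i' \<noteq> i \<longrightarrow> K i i' = 0"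
    and i': "i' \<in> I'"
  shows "push I I' K x i' = K (\<kappa> i') i' * x (\<kappa> i')"
proof -
  have "(\<Sum>i\<in>I. K i i' * x i) = (\<Sum>i\<in>I. if i = \<kappa> i' then K (\<kappa> i') i' * x (\<kappa> i') else 0)"
    by (rule sum.cong) (use k2 i' in auto)
  also have "\<dots> = K (\<kappa> i') i' * x (\<kappa> i')" using fI k1 i' by simp
  finally show ?thesis unfolding push_def using i' by simp
qed

lemma kern_fiber:
  fixes K :: "nat \<Rightarrow> nat \<Rightarrow> real" and G :: "nat \<Rightarrow> real" and \<kappa> :: "nat \<Rightarrow> nat"
  assumes fI: "finite I" and fI': "finite I'" and k1: "\<forall>i'\<in>I'. \<kappa> i' \<in> I"
    and k2: "\<forall>i\<in>I. \<forall>i'\<in>I'. \<kappa> i' \<noteq> i \<longrightarrow> K i i' = 0"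
    and rs: "\<forall>i\<in>I. (\<Sum>i'\<in>I'. K i i') = 1"
  shows "(\<Sum>i'\<in>I'. K (\<kappa> i') i' * G (\<kappa> i')) = (\<Sum>i\<in>I. G i)"
proof -
  have "(\<Sum>i'\<in>I'. K (\<kappa> i') i' * G (\<kappa> i')) = (\<Sum>i\<in>I. \<Sum>i'\<in>{i'\<in>I'. \<kappa> i' = i}. K (\<kappa> i') i' * G (\<kappa> i'))"
    by (rule sum.group[symmetric]) (use fI fI' k1 in auto)
  also have "\<dots> = (\<Sum>i\<in>I. G i)"
  proof (rule sum.cong[OF refl])
    fix i assume i: "i \<in> I"
    have "(\<Sum>i'\<in>{i'\<in>I'. \<kappa> i' = i}. K (\<kappa> i') i' * G (\<kappa> i')) = (\<Sum>i'\<in>{i'\<in>I'. \<kappa> i' = i}. K i i' * G i)"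
      by (rule sum.cong) auto
    also have "\<dots> = (\<Sum>i'\<in>{i'\<in>I'. \<kappa> i' = i}. K i i') * G i"
      by (rule sum_distrib_right[symmetric])
    also have "(\<Sum>i'\<in>{i'\<in>I'. \<kappa> i' = i}. K i i') = (\<Sum>i'\<in>I'. if \<kappa> i' = i then K i i' else 0)"
      using fI' by (rule sum.inter_filter)
    also have "\<dots> = (\<Sum>i'\<in>I'. K i i')"
      by (rule sum.cong) (use k2 i in auto)
    also have "\<dots> = 1" using rs i by simp
    finally show "(\<Sum>i'\<in>{i'\<in>I'. \<kappa> i' = i}. K (\<kappa> i') i' * G (\<kappa> i')) = G i" by simp
  qed
  finally show ?thesis .
qed

lemma block_cong:
  assumes fI: "finite I" and fI': "finite I'" and k1: "\<forall>i'\<in>I'. \<kappa> i' \<in> I"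
    and k0: "\<forall>i\<in>I. \<forall>i'\<in>I'. K i i' \<ge> 0"
    and k2: "\<forall>i\<in>I. \<forall>i'\<in>I'. \<kappa> i' \<noteq> i \<longrightarrow> K i i' = 0"
    and rs: "\<forall>i\<in>I. (\<Sum>i'\<in>I'. K i i') = 1"
    and pm: "push I I' K \<mu> \<in> Mplus I'" and mu: "\<mu> \<in> Mplus I"
    and fB: "finite B" and Bn: "\<forall>j\<in>B. j < length V"
  shows "(\<Sum>i'\<in>I'. push I I' K \<mu> i' powr (1 - real (card B)) * (\<Prod>j\<in>B. (map (push I I' K) V ! j) i'))
       = (\<Sum>i\<in>I. \<mu> i powr (1 - real (card B)) * (\<Prod>j\<in>B. (V!j) i))"
proof -
  let ?G = "\<lambda>i. \<mu> i powr (1 - real (card B)) * (\<Prod>j\<in>B. (V!j) i)"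
  have trm: "push I I' K \<mu> i' powr (1 - real (card B)) * (\<Prod>j\<in>B. (map (push I I' K) V ! j) i')
      = K (\<kappa> i') i' * ?G (\<kappa> i')" if i': "i' \<in> I'" for i'
  proof -
    define k where "k = K (\<kappa> i') i'"
    define u where "u = \<kappa> i'"
    have uI: "u \<in> I" using k1 i' unfolding u_def by simp
    have pmu: "push I I' K \<mu> i' = k * \<mu> u" unfolding k_def u_def by (rule kern_push[OF fI k1 k2 i'])
    have mpos: "\<mu> u > 0" using mu uI unfolding Mplus_def by auto
    have ppos: "push I I' K \<mu> i' > 0" using pm i' unfolding Mplus_def by auto
    have k0': "k \<ge> 0" using k0 uI i' unfolding k_def u_def by simp
    have kpos: "k > 0" using ppos pmu mpos k0' by (metis zero_less_mult_pos2 le_less mult_zero_left not_less_iff_gr_or_eq)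
    have pv: "(map (push I I' K) V ! j) i' = k * (V!j) u" if "j \<in> B" for j
      using Bn that kern_push[OF fI k1 k2 i', of "V!j"] unfolding k_def u_def by simp
    have "(\<Prod>j\<in>B. (map (push I I' K) V ! j) i') = (\<Prod>j\<in>B. k * (V!j) u)"
      by (rule prod.cong) (use pv in auto)
    also have "\<dots> = k ^ card B * (\<Prod>j\<in>B. (V!j) u)" by (simp add: prod.distrib)
    finally have pr: "(\<Prod>j\<in>B. (map (push I I' K) V ! j) i') = k ^ card B * (\<Prod>j\<in>B. (V!j) u)" .
    have kk: "k powr (1 - real (card B)) * k ^ card B = k"
    proof -
      have "k ^ card B = k powr real (card B)" using kpos by (simp add: powr_realpow)
      then have "k powr (1 - real (card B)) * k ^ card B = k powr (1 - real (card B)) * k powr real (card B)"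
        by simp
      also have "\<dots> = k powr (1 - real (card B) + real (card B))"
        by (rule powr_add[symmetric])
      also have "\<dots> = k powr 1" by simp
      also have "\<dots> = k" using kpos by simp
      finally show ?thesis .
    qed
    have "push I I' K \<mu> i' powr (1 - real (card B)) = k powr (1 - real (card B)) * \<mu> u powr (1 - real (card B))"
      using pmu kpos mpos by (simp add: powr_mult)
    then have "push I I' K \<mu> i' powr (1 - real (card B)) * (\<Prod>j\<in>B. (map (push I I' K) V ! j) i')
        = (k powr (1 - real (card B)) * k ^ card B) * ?G u"
      using pr by (simp add: algebra_simps)
    then show ?thesis using kk unfolding k_def u_def by simp
  qed
  have "(\<Sum>i'\<in>I'. push I I' K \<mu> i' powr (1 - real (card B)) * (\<Prod>j\<in>B. (map (push I I' K) V ! j) i'))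
      = (\<Sum>i'\<in>I'. K (\<kappa> i') i' * ?G (\<kappa> i'))"
    by (rule sum.cong) (use trm in auto)
  also have "\<dots> = (\<Sum>i\<in>I. ?G i)" by (rule kern_fiber[OF fI fI' k1 k2 rs])
  finally show ?thesis .
qed

lemma cmk_D:
  assumes "congruent_markov_kernel I I' K"
  obtains \<kappa> where "\<forall>i'\<in>I'. \<kappa> i' \<in> I" "\<forall>i\<in>I. \<forall>i'\<in>I'. \<kappa> i' \<noteq> i \<longrightarrow> K i i' = 0"
    "\<forall>i\<in>I. \<forall>i'\<in>I'. K i i' \<ge> 0" "\<forall>i\<in>I. (\<Sum>i'\<in>I'. K i i') = 1"
  using assms unfolding congruent_markov_kernel_def by blast

lemma tauP_cong:
  assumes P: "P \<in> Part n" and len: "length V = n" and K: "congruent_markov_kernel I I' K"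
    and fI: "finite I" and fI': "finite I'" and pm: "push I I' K ` Mplus I \<subseteq> Mplus I'" and mu: "\<mu> \<in> Mplus I"
  shows "tauP I' P (push I I' K \<mu>) (map (push I I' K) V) = tauP I P \<mu> V"
proof -
  obtain \<kappa> where k: "\<forall>i'\<in>I'. \<kappa> i' \<in> I" "\<forall>i\<in>I. \<forall>i'\<in>I'. \<kappa> i' \<noteq> i \<longrightarrow> K i i' = 0"
    "\<forall>i\<in>I. \<forall>i'\<in>I'. K i i' \<ge> 0" "\<forall>i\<in>I. (\<Sum>i'\<in>I'. K i i') = 1" using cmk_D[OF K] by blast
  have pmu: "push I I' K \<mu> \<in> Mplus I'" using pm mu by blast
  show ?thesis unfolding tauP_formula[OF P]
  proof (rule prod.cong[OF refl])
    fix B assume B: "B \<in> P"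
    have "finite B" "\<forall>j\<in>B. j < length V" using Part_finite_blocks[OF P B] len by auto
    then show "(\<Sum>i'\<in>I'. push I I' K \<mu> i' powr (1 - real (card B)) * (\<Prod>j\<in>B. (map (push I I' K) V ! j) i'))
       = (\<Sum>i\<in>I. \<mu> i powr (1 - real (card B)) * (\<Prod>j\<in>B. (V!j) i))"
      by (intro block_cong[OF fI fI' k(1) k(3) k(2) k(4) pmu mu])
  qed
qed

lemma norm1_cong:
  assumes K: "congruent_markov_kernel I I' K"
    and fI: "finite I" and fI': "finite I'" and pm: "push I I' K ` Mplus I \<subseteq> Mplus I'" and mu: "\<mu> \<in> Mplus I"
  shows "norm1 I' (push I I' K \<mu>) = norm1 I \<mu>"
proof -
  obtain \<kappa> where k: "\<forall>i'\<in>I'. \<kappa> i' \<in> I" "\<forall>i\<in>I. \<forall>i'\<in>I'. \<kappa> i' \<noteq> i \<longrightarrow> K i i' = 0"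
    "\<forall>i\<in>I. \<forall>i'\<in>I'. K i i' \<ge> 0" "\<forall>i\<in>I. (\<Sum>i'\<in>I'. K i i') = 1" using cmk_D[OF K] by blast
  have "norm1 I' (push I I' K \<mu>) = (\<Sum>i'\<in>I'. K (\<kappa> i') i' * \<bar>\<mu> (\<kappa> i')\<bar>)"
    unfolding norm1_def
  proof (rule sum.cong[OF refl])
    fix i' assume i': "i' \<in> I'"
    have "K (\<kappa> i') i' \<ge> 0" using k i' by simp
    then show "\<bar>push I I' K \<mu> i'\<bar> = K (\<kappa> i') i' * \<bar>\<mu> (\<kappa> i')\<bar>"
      using kern_push[OF fI k(1) k(2) i'] by (simp add: abs_mult)
  qed
  also have "\<dots> = norm1 I \<mu>" unfolding norm1_def by (rule kern_fiber[OF fI fI' k(1) k(2) k(4)])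
  finally show ?thesis .
qed

definition ukern :: "(nat \<Rightarrow> nat) \<Rightarrow> nat \<Rightarrow> nat \<Rightarrow> nat \<Rightarrow> real" where
  "ukern \<kappa> m i j = (if \<kappa> j = i then 1 / real m else 0)"

lemma ukern_push:
  assumes fI: "finite I" and k1: "\<forall>j\<in>J. \<kappa> j \<in> I"
  shows "push I J (ukern \<kappa> m) x = (\<lambda>j. if j \<in> J then x (\<kappa> j) / real m else 0)"
proof
  fix j
  show "push I J (ukern \<kappa> m) x j = (if j \<in> J then x (\<kappa> j) / real m else 0)"
  proof (cases "j \<in> J")
    case True
    have "(\<Sum>i\<in>I. ukern \<kappa> m i j * x i) = (\<Sum>i\<in>I. if i = \<kappa> j then x (\<kappa> j) / real m else 0)"
      by (rule sum.cong) (auto simp: ukern_def)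
    also have "\<dots> = x (\<kappa> j) / real m" using fI k1 True by simp
    finally show ?thesis unfolding push_def using True by simp
  next
    case False
    then show ?thesis unfolding push_def by simp
  qed
qed

lemma ukern_props:
  assumes fI: "finite I" and fJ: "finite J" and k1: "\<forall>j\<in>J. \<kappa> j \<in> I"
    and fib: "\<forall>i\<in>I. card {j\<in>J. \<kappa> j = i} = m" and m: "m > 0"
  shows "congruent_markov_kernel I J (ukern \<kappa> m)" "push I J (ukern \<kappa> m) ` Mplus I \<subseteq> Mplus J"
proof -
  have rs: "(\<Sum>j\<in>J. ukern \<kappa> m i j) = 1" if i: "i \<in> I" for i
  proof -
    have "(\<Sum>j\<in>J. ukern \<kappa> m i j) = (\<Sum>j\<in>J. if \<kappa> j = i then 1 / real m else 0)"
      unfolding ukern_def by simp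
    also have "\<dots> = (\<Sum>j\<in>{j\<in>J. \<kappa> j = i}. 1 / real m)"
      using fJ by (rule sum.inter_filter[symmetric])
    also have "\<dots> = 1" using fib i m by simp
    finally show ?thesis .
  qed
  show "congruent_markov_kernel I J (ukern \<kappa> m)"
    unfolding congruent_markov_kernel_def
  proof (intro conjI)
    show "\<forall>i\<in>I. \<forall>i'\<in>J. 0 \<le> ukern \<kappa> m i i'" unfolding ukern_def by simp
    show "\<forall>i\<in>I. (\<Sum>i'\<in>J. ukern \<kappa> m i i') = 1" using rs by blast
    show "\<exists>\<kappa>'. (\<forall>i'\<in>J. \<kappa>' i' \<in> I) \<and> (\<forall>i\<in>I. \<forall>i'\<in>J. \<kappa>' i' \<noteq> i \<longrightarrow> ukern \<kappa> m i i' = 0)"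
      using k1 unfolding ukern_def by auto
  qed
  show "push I J (ukern \<kappa> m) ` Mplus I \<subseteq> Mplus J"
  proof
    fix y assume "y \<in> push I J (ukern \<kappa> m) ` Mplus I"
    then obtain x where x: "x \<in> Mplus I" "y = push I J (ukern \<kappa> m) x" by blast
    then have y: "y = (\<lambda>j. if j \<in> J then x (\<kappa> j) / real m else 0)" using ukern_push[OF fI k1] by simp
    have "\<forall>j\<in>J. y j > 0" using x(1) k1 m unfolding y Mplus_def by auto
    moreover have "y \<in> Sig J" unfolding y Sig_def by simp
    ultimately show "y \<in> Mplus J" unfolding Mplus_def by simp
  qed
qed

lemma ukern_cI:
  assumes fI: "finite I" and k1: "\<forall>j\<in>J. \<kappa> j \<in> I" and cJ: "card J = card I * m"
  shows "push I J (ukern \<kappa> m) (\<lambda>i. t * cI I i) = (\<lambda>j. t * cI J j)"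
  unfolding ukern_push[OF fI k1] cI_def using k1 cJ by auto

lemma split_exists:
  assumes fI: "finite I" and fJ: "finite J" and m: "m > 0" and c: "card J = card I * m"
  shows "\<exists>\<kappa>. (\<forall>j\<in>J. \<kappa> j \<in> I) \<and> (\<forall>i\<in>I. card {j\<in>J. \<kappa> j = i} = m)"
proof -
  have cc: "card J = card (I \<times> {0..<m})" using c by (simp add: card_cartesian_product)
  have fP: "finite (I \<times> {0..<m})" using fI by simp
  obtain h where h: "bij_betw h J (I \<times> {0..<m})"
    using finite_same_card_bij[OF fJ fP cc] by (elim exE)
  have hJ: "h ` J = I \<times> {0..<m}" and hi: "inj_on h J" using h unfolding bij_betw_def by auto
  define \<kappa> where "\<kappa> j = fst (h j)" for j
  have k1: "\<forall>j\<in>J. \<kappa> j \<in> I"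
  proof
    fix j assume "j \<in> J"
    then have "h j \<in> h ` J" by simp
    then have "h j \<in> I \<times> {0..<m}" by (simp only: hJ)
    then show "\<kappa> j \<in> I" unfolding \<kappa>_def by (cases "h j") simp
  qed
  moreover have "card {j\<in>J. \<kappa> j = i} = m" if i: "i \<in> I" for i
  proof -
    have inj: "inj_on h {j\<in>J. \<kappa> j = i}" by (rule inj_on_subset[OF hi]) blast
    have "h ` {j\<in>J. \<kappa> j = i} = {i} \<times> {0..<m}"
    proof
      show "h ` {j\<in>J. \<kappa> j = i} \<subseteq> {i} \<times> {0..<m}"
      proof
        fix p assume "p \<in> h ` {j\<in>J. \<kappa> j = i}"
        then obtain j where j: "j \<in> J" "\<kappa> j = i" "p = h j" by blast
        then have "p \<in> I \<times> {0..<m}" using hJ by blast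
        then show "p \<in> {i} \<times> {0..<m}" using j unfolding \<kappa>_def by (cases p) auto
      qed
      show "{i} \<times> {0..<m} \<subseteq> h ` {j\<in>J. \<kappa> j = i}"
      proof
        fix p assume p: "p \<in> {i} \<times> {0..<m}"
        then have "p \<in> h ` J" using hJ i by auto
        then obtain j where "j \<in> J" "p = h j" by blast
        then show "p \<in> h ` {j\<in>J. \<kappa> j = i}" using p unfolding \<kappa>_def by auto
      qed
    qed
    then have "card {j\<in>J. \<kappa> j = i} = card ({i} \<times> {0..<m})"
      using card_image[OF inj] by simp
    then show ?thesis by (simp add: card_cartesian_product)
  qed
  ultimately show ?thesis by blast
qed

lemma perm_exists:
  fixes n :: nat and \<iota> \<iota>' :: "nat \<Rightarrow> nat"
  assumes fI: "finite I" and r: "\<forall>k<n. \<iota> k \<in> I" and r': "\<forall>k<n. \<iota>' k \<in> I"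
    and pat: "\<forall>j<n. \<forall>k<n. \<iota> j = \<iota> k \<longleftrightarrow> \<iota>' j = \<iota>' k"
  shows "\<exists>\<kappa>. bij_betw \<kappa> I I \<and> (\<forall>k<n. \<kappa> (\<iota>' k) = \<iota> k)"
proof -
  define A' where "A' = \<iota>' ` {0..<n}"
  define A where "A = \<iota> ` {0..<n}"
  define h where "h x = \<iota> (SOME k. k < n \<and> \<iota>' k = x)" for x
  have hk: "h (\<iota>' k) = \<iota> k" if k: "k < n" for k
  proof -
    have "\<exists>k'. k' < n \<and> \<iota>' k' = \<iota>' k" using k by blast
    then have s: "(SOME k'. k' < n \<and> \<iota>' k' = \<iota>' k) < n \<and> \<iota>' (SOME k'. k' < n \<and> \<iota>' k' = \<iota>' k) = \<iota>' k"
      by (rule someI_ex)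
    then show ?thesis unfolding h_def using pat k by blast
  qed
  have bh: "bij_betw h A' A"
    unfolding bij_betw_def
  proof
    show "inj_on h A'"
    proof (rule inj_onI)
      fix x y assume "x \<in> A'" "y \<in> A'" "h x = h y"
      then obtain j k where jk: "j < n" "k < n" "x = \<iota>' j" "y = \<iota>' k" "h x = h y" unfolding A'_def by auto
      then have "\<iota> j = \<iota> k" using hk by simp
      then show "x = y" using pat jk by blast
    qed
    show "h ` A' = A" unfolding A'_def A_def image_image by (rule image_cong) (auto simp: hk)
  qed
  have fA: "A \<subseteq> I" "A' \<subseteq> I" using r r' unfolding A_def A'_def by auto
  have "card A' = card A" using bij_betw_same_card[OF bh] .
  then have "card (I - A') = card (I - A)"
    using fA fI by (simp add: card_Diff_subset finite_subset)
  then obtain g where g: "bij_betw g (I - A') (I - A)"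
    using finite_same_card_bij fI by (meson finite_Diff)
  define \<kappa> where "\<kappa> x = (if x \<in> A' then h x else g x)" for x
  have b1: "bij_betw \<kappa> A' A" using bh unfolding \<kappa>_def by (rule bij_betw_cong[THEN iffD1, rotated]) auto
  have b2: "bij_betw \<kappa> (I - A') (I - A)" using g unfolding \<kappa>_def by (rule bij_betw_cong[THEN iffD1, rotated]) auto
  have "bij_betw \<kappa> (A' \<union> (I - A')) (A \<union> (I - A))" by (rule bij_betw_combine[OF b1 b2]) auto
  moreover have "A' \<union> (I - A') = I" "A \<union> (I - A) = I" using fA by auto
  ultimately have "bij_betw \<kappa> I I" by simp
  moreover have "\<forall>k<n. \<kappa> (\<iota>' k) = \<iota> k" using hk unfolding \<kappa>_def A'_def by auto
  ultimately show ?thesis by blast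
qed

lemma perm_fiber:
  assumes "bij_betw \<kappa> I I" "i \<in> I"
  shows "card {j\<in>I. \<kappa> j = i} = 1"
proof -
  have "{j\<in>I. \<kappa> j = i} = {inv_into I \<kappa> i}"
  proof
    show "{j\<in>I. \<kappa> j = i} \<subseteq> {inv_into I \<kappa> i}"
      using assms by (auto simp: bij_betw_def)
    show "{inv_into I \<kappa> i} \<subseteq> {j\<in>I. \<kappa> j = i}"
      using assms by (auto simp: bij_betw_def inv_into_into f_inv_into_f)
  qed
  then show ?thesis by simp
qed

definition wP :: "nat set \<Rightarrow> real \<Rightarrow> nat set set \<Rightarrow> real" where
  "wP I t P = (\<Prod>B\<in>P. (t / real (card I)) powr (1 - real (card B)))"

lemma wP_nz: "finite I \<Longrightarrow> I \<noteq> {} \<Longrightarrow> t > 0 \<Longrightarrow> wP I t P \<noteq> 0"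
  unfolding wP_def
  by (metis (no_types, lifting) card_gt_0_iff divide_pos_pos less_numeral_extra(3) of_nat_0_less_iff
      powr_gt_zero prod_pos)

lemma mu0_Mplus: "finite I \<Longrightarrow> I \<noteq> {} \<Longrightarrow> t > 0 \<Longrightarrow> (\<lambda>i. t * cI I i) \<in> Mplus I"
  unfolding Mplus_def Sig_def cI_def by (auto simp: card_gt_0_iff)

lemma norm1_mu0: "finite I \<Longrightarrow> I \<noteq> {} \<Longrightarrow> t > 0 \<Longrightarrow> norm1 I (\<lambda>i. t * cI I i) = t"
  unfolding norm1_def cI_def by (simp add: card_gt_0_iff)

lemma bas_valid: "\<forall>k<n. \<iota> k \<in> I \<Longrightarrow> length (bas n \<iota>) = n \<and> set (bas n \<iota>) \<subseteq> Sig I"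
  unfolding bas_def using dlt_Sig by auto

lemma prod_dlt:
  assumes "finite B"
  shows "(\<Prod>j\<in>B. dlt (\<iota> j) i) = (if \<forall>j\<in>B. \<iota> j = i then 1 else 0)"
proof (cases "\<forall>j\<in>B. \<iota> j = i")
  case True
  then have "(\<Prod>j\<in>B. dlt (\<iota> j) i) = (\<Prod>j\<in>B. 1)" by (intro prod.cong) (auto simp: dlt_def)
  then show ?thesis using True by simp
next
  case False
  then obtain j where "j \<in> B" "\<iota> j \<noteq> i" by blast
  then have "(\<Prod>j\<in>B. dlt (\<iota> j) i) = 0" using assms by (intro prod_zero) (auto simp: dlt_def)
  then show ?thesis using False by simp
qed

lemma tauP_bas:
  assumes P: "P \<in> Part n" and fI: "finite I" and ne: "I \<noteq> {}" and t: "t > 0" and r: "\<forall>k<n. \<iota> k \<in> I"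
  shows "tauP I P (\<lambda>i. t * cI I i) (bas n \<iota>) = (if refines P (kerpart n \<iota>) then wP I t P else 0)"
proof -
  define x where "x B = (t / real (card I)) powr (1 - real (card B))" for B :: "nat set"
  define cst where "cst B = (\<exists>C\<in>kerpart n \<iota>. B \<subseteq> C)" for B
  have pP: "partition_on {0..<n} P" using P unfolding Part_def by simp
  have fac: "(\<Sum>i\<in>I. (t * cI I i) powr (1 - real (card B)) * (\<Prod>j\<in>B. (bas n \<iota> ! j) i))
       = (if cst B then x B else 0)" if B: "B \<in> P" for B
  proof -
    have fB: "finite B" and Bn: "B \<subseteq> {0..<n}" using Part_finite_blocks[OF P B] by auto
    obtain j0 where j0: "j0 \<in> B" using B partition_onD3[OF pP] by (metis all_not_in_conv)
    have j0n: "j0 < n" using j0 Bn by auto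
    have cstiff: "cst B \<longleftrightarrow> (\<forall>j\<in>B. \<iota> j = \<iota> j0)"
    proof
      assume "cst B"
      then obtain C where C: "C \<in> kerpart n \<iota>" "B \<subseteq> C" unfolding cst_def by blast
      from C(1) obtain a where "C = {k \<in> {0..<n}. \<iota> k = \<iota> a}" unfolding kerpart_def by (rule imageE)
      then have sub: "B \<subseteq> {k \<in> {0..<n}. \<iota> k = \<iota> a}" using C(2) by simp
      show "\<forall>j\<in>B. \<iota> j = \<iota> j0"
      proof
        fix j assume "j \<in> B"
        then have "\<iota> j = \<iota> a" "\<iota> j0 = \<iota> a" using sub j0 by (blast, blast)
        then show "\<iota> j = \<iota> j0" by simp
      qed
    next
      assume h: "\<forall>j\<in>B. \<iota> j = \<iota> j0"
      have "{k \<in> {0..<n}. \<iota> k = \<iota> j0} \<in> kerpart n \<iota>"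
        unfolding kerpart_def using j0n by (intro image_eqI[where x=j0]) auto
      moreover have "B \<subseteq> {k \<in> {0..<n}. \<iota> k = \<iota> j0}" using h Bn by auto
      ultimately show "cst B" unfolding cst_def by blast
    qed
    have "(\<Sum>i\<in>I. (t * cI I i) powr (1 - real (card B)) * (\<Prod>j\<in>B. (bas n \<iota> ! j) i))
        = (\<Sum>i\<in>I. if i = \<iota> j0 \<and> cst B then x B else 0)"
    proof (rule sum.cong[OF refl])
      fix i assume i: "i \<in> I"
      have "(\<Prod>j\<in>B. (bas n \<iota> ! j) i) = (\<Prod>j\<in>B. dlt (\<iota> j) i)"
        by (rule prod.cong) (use Bn in \<open>auto simp: bas_def\<close>)
      also have "\<dots> = (if \<forall>j\<in>B. \<iota> j = i then 1 else 0)" by (rule prod_dlt[OF fB])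
      also have "(\<forall>j\<in>B. \<iota> j = i) \<longleftrightarrow> i = \<iota> j0 \<and> cst B" using cstiff j0 by auto
      finally have pr: "(\<Prod>j\<in>B. (bas n \<iota> ! j) i) = (if i = \<iota> j0 \<and> cst B then 1 else 0)" .
      have "t * cI I i = t / real (card I)" using i unfolding cI_def by simp
      then show "(t * cI I i) powr (1 - real (card B)) * (\<Prod>j\<in>B. (bas n \<iota> ! j) i)
          = (if i = \<iota> j0 \<and> cst B then x B else 0)" using pr unfolding x_def by simp
    qed
    also have "\<dots> = (if cst B then x B else 0)" using fI r j0n by (cases "cst B") auto
    finally show ?thesis .
  qed
  have "tauP I P (\<lambda>i. t * cI I i) (bas n \<iota>) = (\<Prod>B\<in>P. if cst B then x B else 0)"
    unfolding tauP_formula[OF P] by (rule prod.cong) (use fac in auto)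
  also have "\<dots> = (if refines P (kerpart n \<iota>) then wP I t P else 0)"
  proof (cases "refines P (kerpart n \<iota>)")
    case True
    then have "\<forall>B\<in>P. cst B" unfolding refines_def cst_def by blast
    then have "(\<Prod>B\<in>P. if cst B then x B else 0) = (\<Prod>B\<in>P. x B)" by (intro prod.cong) auto
    then show ?thesis using True unfolding wP_def x_def by simp
  next
    case False
    then obtain B where B: "B \<in> P" "\<not> cst B" unfolding refines_def cst_def by blast
    have fP: "finite P" using partition_onD1[OF pP] by (metis finite_UnionD finite_atLeastLessThan)
    have "(\<Prod>B\<in>P. if cst B then x B else 0) = 0" using B fP by (intro prod_zero) auto
    then show ?thesis using False by simp
  qed
  finally show ?thesis .
qed

lemma lin_slot:
  assumes P: "P \<in> Part n" and j: "j < n" and len: "length V = n"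
  shows "\<exists>L R. \<forall>z. tauP I P \<mu> (V[j := z]) = R * (\<Sum>i\<in>I. L i * z i)"
proof -
  have pP: "partition_on {0..<n} P" using P unfolding Part_def by simp
  have fP: "finite P" using partition_onD1[OF pP] by (metis finite_UnionD finite_atLeastLessThan)
  obtain B0 where B0: "B0 \<in> P" "j \<in> B0"
    using partition_onD1[OF pP] j by (metis UnionE atLeastLessThan_iff le0)
  have fB0: "finite B0" using Part_finite_blocks[OF P B0(1)] by simp
  define F where "F B W = (\<Sum>i\<in>I. \<mu> i powr (1 - real (card B)) * (\<Prod>l\<in>B. (W!l) i))" for B W
  define R where "R = (\<Prod>B\<in>P - {B0}. F B V)"
  define L where "L i = \<mu> i powr (1 - real (card B0)) * (\<Prod>l\<in>B0 - {j}. (V!l) i)" for i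
  have "tauP I P \<mu> (V[j := z]) = R * (\<Sum>i\<in>I. L i * z i)" for z
  proof -
    have "tauP I P \<mu> (V[j := z]) = F B0 (V[j := z]) * (\<Prod>B\<in>P - {B0}. F B (V[j := z]))"
      unfolding tauP_formula[OF P] F_def[symmetric] using fP B0(1) by (rule prod.remove)
    moreover have "(\<Prod>B\<in>P - {B0}. F B (V[j := z])) = R"
      unfolding R_def
    proof (rule prod.cong[OF refl])
      fix B assume B: "B \<in> P - {B0}"
      then have "j \<notin> B" using part_unique[OF pP, of B B0 j] B0 by auto
      then have "(V[j := z])!l = V!l" if "l \<in> B" for l
      proof -
        have "j \<noteq> l" using that \<open>j \<notin> B\<close> by blast
        then show ?thesis by simp
      qed
      then show "F B (V[j := z]) = F B V" unfolding F_def by simp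
    qed
    moreover have "F B0 (V[j := z]) = (\<Sum>i\<in>I. L i * z i)"
      unfolding F_def L_def
    proof (rule sum.cong[OF refl])
      fix i
      have "(\<Prod>l\<in>B0. (V[j := z] ! l) i) = (V[j := z] ! j) i * (\<Prod>l\<in>B0 - {j}. (V[j := z] ! l) i)"
        using fB0 B0(2) by (rule prod.remove)
      also have "\<dots> = z i * (\<Prod>l\<in>B0 - {j}. (V ! l) i)" using j len by simp
      finally show "\<mu> i powr (1 - real (card B0)) * (\<Prod>l\<in>B0. (V[j := z] ! l) i) =
          \<mu> i powr (1 - real (card B0)) * (\<Prod>l\<in>B0 - {j}. (V ! l) i) * z i" by simp
    qed
    ultimately show ?thesis by simp
  qed
  then show ?thesis by blast
qed

lemma mlin_tauP: "P \<in> Part n \<Longrightarrow> mlin n I (tauP I P \<mu>)"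
  unfolding mlin_def
proof (intro allI impI ballI)
  fix V j x y and c :: real
  assume P: "P \<in> Part n" and V: "length V = n \<and> set V \<subseteq> Sig I" and j: "j < n"
  obtain L R where LR: "\<forall>z. tauP I P \<mu> (V[j := z]) = R * (\<Sum>i\<in>I. L i * z i)"
    using lin_slot[OF P j] V by blast
  have "(\<Sum>i\<in>I. L i * (c * x i + y i)) = c * (\<Sum>i\<in>I. L i * x i) + (\<Sum>i\<in>I. L i * y i)"
    by (simp add: sum.distrib sum_distrib_left algebra_simps)
  then show "tauP I P \<mu> (V[j := (\<lambda>i. c * x i + y i)]) = c * tauP I P \<mu> (V[j := x]) + tauP I P \<mu> (V[j := y])"
    using LR by (simp add: algebra_simps)
qed

lemma mlin_comb:
  assumes "finite S" "\<forall>P\<in>S. mlin n I (T P)"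
  shows "mlin n I (\<lambda>V. \<Sum>P\<in>S. b P * T P V)"
  unfolding mlin_def
proof (intro allI impI ballI)
  fix V j x y and c :: real
  assume V: "length V = n \<and> set V \<subseteq> Sig I" and j: "j < n" and x: "x \<in> Sig I" and y: "y \<in> Sig I"
  have "T P (V[j := (\<lambda>i. c * x i + y i)]) = c * T P (V[j := x]) + T P (V[j := y])" if "P \<in> S" for P
    using mlin_D[of n I "T P" V j x y c] assms(2) that V j x y by blast
  then have "(\<Sum>P\<in>S. b P * T P (V[j := (\<lambda>i. c * x i + y i)]))
      = (\<Sum>P\<in>S. c * (b P * T P (V[j := x])) + b P * T P (V[j := y]))"
    by (intro sum.cong) (auto simp: algebra_simps)
  also have "\<dots> = c * (\<Sum>P\<in>S. b P * T P (V[j := x])) + (\<Sum>P\<in>S. b P * T P (V[j := y]))"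
    by (simp add: sum.distrib sum_distrib_left)
  finally show "(\<Sum>P\<in>S. b P * T P (V[j := (\<lambda>i. c * x i + y i)]))
      = c * (\<Sum>P\<in>S. b P * T P (V[j := x])) + (\<Sum>P\<in>S. b P * T P (V[j := y]))" .
qed

lemma refines_refl: "refines Q Q" unfolding refines_def by blast

lemma sum_tau_bas:
  assumes fI: "finite I" and ne: "I \<noteq> {}" and t: "t > 0" and r: "\<forall>k<n. \<iota> k \<in> I"
  shows "(\<Sum>P\<in>Part n. b P * tauP I P (\<lambda>i. t * cI I i) (bas n \<iota>))
       = (\<Sum>P\<in>{P\<in>Part n. refines P (kerpart n \<iota>)}. b P * wP I t P)"
proof -
  have "(\<Sum>P\<in>Part n. b P * tauP I P (\<lambda>i. t * cI I i) (bas n \<iota>))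
      = (\<Sum>P\<in>Part n. if refines P (kerpart n \<iota>) then b P * wP I t P else 0)"
    by (rule sum.cong[OF refl]) (simp add: tauP_bas[OF _ fI ne t r])
  also have "\<dots> = (\<Sum>P\<in>{P\<in>Part n. refines P (kerpart n \<iota>)}. b P * wP I t P)"
    by (rule sum.inter_filter[OF finite_Part, symmetric])
  finally show ?thesis .
qed

lemma exist_at:
  assumes fI: "finite I" and ne: "I \<noteq> {}" and nI: "n \<le> card I" and t: "t > 0"
    and ML1: "mlin n I T"
    and PI: "\<And>\<iota> \<iota>'. \<forall>k<n. \<iota> k \<in> I \<Longrightarrow> \<forall>k<n. \<iota>' k \<in> I \<Longrightarrow> kerpart n \<iota> = kerpart n \<iota>'
              \<Longrightarrow> T (bas n \<iota>) = T (bas n \<iota>')"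
  shows "\<exists>b. \<forall>V. length V = n \<and> set V \<subseteq> Sig I \<longrightarrow>
            T V = (\<Sum>P\<in>Part n. b P * tauP I P (\<lambda>i. t * cI I i) V)"
proof -
  have ex: "\<exists>\<iota>. (\<forall>k<n. \<iota> k \<in> I) \<and> kerpart n \<iota> = Q" if Q: "Q \<in> Part n" for Q
  proof -
    have "card Q \<le> n" using card_part_le[of "{0..<n}" Q] Q unfolding Part_def by simp
    then show ?thesis using kerpart_exists[OF Q fI] nI by simp
  qed
  define iQ where "iQ Q = (SOME \<iota>. (\<forall>k<n. \<iota> k \<in> I) \<and> kerpart n \<iota> = Q)" for Q
  have iQ: "(\<forall>k<n. iQ Q k \<in> I) \<and> kerpart n (iQ Q) = Q" if "Q \<in> Part n" for Q
    unfolding iQ_def by (rule someI_ex[of "\<lambda>\<iota>. (\<forall>k<n. \<iota> k \<in> I) \<and> kerpart n \<iota> = Q"]) (rule ex[OF that])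
  define f where "f Q = T (bas n (iQ Q))" for Q
  have mono: "\<forall>P\<in>Part n. \<forall>Q\<in>Part n. refines P Q \<and> P \<noteq> Q \<longrightarrow> card Q < card P"
    using refines_card by blast
  obtain b where b: "\<forall>Q\<in>Part n. f Q = (\<Sum>P\<in>{P\<in>Part n. refines P Q}. b P * wP I t P)"
    using tri_exists[OF finite_Part, where R=refines and \<rho>=card and w="wP I t" and f=f] refines_refl mono wP_nz[OF fI ne t]
    by blast
  show ?thesis
  proof (intro exI allI impI)
    fix V assume V: "length V = n \<and> set V \<subseteq> Sig I"
    have M2: "mlin n I (\<lambda>V. \<Sum>P\<in>Part n. b P * tauP I P (\<lambda>i. t * cI I i) V)"
      by (rule mlin_comb[OF finite_Part]) (use mlin_tauP in blast)
    show "T V = (\<Sum>P\<in>Part n. b P * tauP I P (\<lambda>i. t * cI I i) V)"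
    proof (rule agree[OF fI ML1 M2 _ conjunct1[OF V] conjunct2[OF V]], intro allI impI)
      fix \<iota> assume r: "\<forall>k<n. \<iota> k \<in> I"
      define Q where "Q = kerpart n \<iota>"
      have Q: "Q \<in> Part n" unfolding Q_def by (rule kerpart_Part)
      have "T (bas n \<iota>) = T (bas n (iQ Q))"
        by (rule PI[OF r]) (use iQ[OF Q] Q_def in auto)
      also have "\<dots> = (\<Sum>P\<in>{P\<in>Part n. refines P Q}. b P * wP I t P)" using b Q unfolding f_def by simp
      also have "\<dots> = (\<Sum>P\<in>Part n. b P * tauP I P (\<lambda>i. t * cI I i) (bas n \<iota>))"
        unfolding Q_def by (rule sum_tau_bas[OF fI ne t r, symmetric])
      finally show "T (bas n \<iota>) = (\<Sum>P\<in>Part n. b P * tauP I P (\<lambda>i. t * cI I i) (bas n \<iota>))" .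
    qed
  qed
qed

lemma uniq_at:
  assumes fI: "finite I" and ne: "I \<noteq> {}" and nI: "n \<le> card I" and t: "t > 0"
    and h: "\<forall>V. length V = n \<and> set V \<subseteq> Sig I \<longrightarrow>
      (\<Sum>P\<in>Part n. a P * tauP I P (\<lambda>i. t * cI I i) V) = (\<Sum>P\<in>Part n. b P * tauP I P (\<lambda>i. t * cI I i) V)"
  shows "\<forall>P\<in>Part n. a P = b P"
proof -
  have mono: "\<forall>P\<in>Part n. \<forall>Q\<in>Part n. refines P Q \<and> P \<noteq> Q \<longrightarrow> card Q < card P"
    using refines_card by blast
  have z: "\<forall>Q\<in>Part n. (\<Sum>P\<in>{P\<in>Part n. refines P Q}. (a P - b P) * wP I t P) = 0"
  proof
    fix Q assume Q: "Q \<in> Part n"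
    have "card Q \<le> n" using card_part_le[of "{0..<n}" Q] Q unfolding Part_def by simp
    then obtain \<iota> where \<iota>: "\<forall>k<n. \<iota> k \<in> I" "kerpart n \<iota> = Q" using kerpart_exists[OF Q fI] nI by auto
    have "(\<Sum>P\<in>Part n. a P * tauP I P (\<lambda>i. t * cI I i) (bas n \<iota>))
        = (\<Sum>P\<in>Part n. b P * tauP I P (\<lambda>i. t * cI I i) (bas n \<iota>))"
      using h bas_valid[OF \<iota>(1)] by blast
    then have "(\<Sum>P\<in>{P\<in>Part n. refines P Q}. a P * wP I t P) = (\<Sum>P\<in>{P\<in>Part n. refines P Q}. b P * wP I t P)"
      unfolding sum_tau_bas[OF fI ne t \<iota>(1)] \<iota>(2) .
    then show "(\<Sum>P\<in>{P\<in>Part n. refines P Q}. (a P - b P) * wP I t P) = 0"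
      by (simp add: algebra_simps sum_subtractf)
  qed
  have "\<forall>Q\<in>Part n. a Q - b Q = 0"
    by (rule tri_uniq[OF finite_Part, where R=refines and \<rho>=card and w="wP I t" and d="\<lambda>P. a P - b P"])
       (use refines_refl mono wP_nz[OF fI ne t] z in auto)
  then show ?thesis by simp
qed

lemma cong_apply:
  assumes "congruent_family n \<Theta>" "finite I" "I \<noteq> {}" "finite I'" "I' \<noteq> {}"
    "congruent_markov_kernel I I' K" "push I I' K ` Mplus I \<subseteq> Mplus I'" "\<mu> \<in> Mplus I"
    "length V = n" "set V \<subseteq> Sig I"
  shows "\<Theta> I' (push I I' K \<mu>) (map (push I I' K) V) = \<Theta> I \<mu> V"
  using assms unfolding congruent_family_def by blast

lemma pattern_inv:
  assumes C: "congruent_family n \<Theta>" and fI: "finite I" and ne: "I \<noteq> {}" and t: "t > 0"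
    and r: "\<forall>k<n. \<iota> k \<in> I" and r': "\<forall>k<n. \<iota>' k \<in> I" and kp: "kerpart n \<iota> = kerpart n \<iota>'"
  shows "\<Theta> I (\<lambda>i. t * cI I i) (bas n \<iota>) = \<Theta> I (\<lambda>i. t * cI I i) (bas n \<iota>')"
proof -
  have pat: "\<forall>j<n. \<forall>k<n. \<iota> j = \<iota> k \<longleftrightarrow> \<iota>' j = \<iota>' k" using kerpart_pattern[OF kp] by blast
  obtain \<kappa> where \<kappa>: "bij_betw \<kappa> I I" "\<forall>k<n. \<kappa> (\<iota>' k) = \<iota> k"
    using perm_exists[OF fI r r' pat] by blast
  have k1: "\<forall>j\<in>I. \<kappa> j \<in> I" using \<kappa>(1) unfolding bij_betw_def by auto
  have fib: "\<forall>i\<in>I. card {j\<in>I. \<kappa> j = i} = 1" using perm_fiber[OF \<kappa>(1)] by blast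
  note up = ukern_props[OF fI fI k1 fib zero_less_one]
  have pmu: "push I I (ukern \<kappa> 1) (\<lambda>i. t * cI I i) = (\<lambda>i. t * cI I i)"
    using ukern_cI[OF fI k1, of 1 t] by simp
  have pd: "push I I (ukern \<kappa> 1) (dlt (\<iota> k)) = dlt (\<iota>' k)" if k: "k < n" for k
  proof
    fix j
    show "push I I (ukern \<kappa> 1) (dlt (\<iota> k)) j = dlt (\<iota>' k) j"
    proof (cases "j \<in> I")
      case True
      have "\<kappa> j = \<iota> k \<longleftrightarrow> j = \<iota>' k"
        using \<kappa>(2) k True r' \<kappa>(1) unfolding bij_betw_def by (metis inj_on_eq_iff)
      then show ?thesis unfolding ukern_push[OF fI k1] dlt_def using True by simp
    next
      case False
      then have "j \<noteq> \<iota>' k" using r' k by blast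
      then show ?thesis unfolding ukern_push[OF fI k1] dlt_def using False by simp
    qed
  qed
  have mb: "map (push I I (ukern \<kappa> 1)) (bas n \<iota>) = bas n \<iota>'"
    unfolding bas_def using pd by simp
  have "\<Theta> I (push I I (ukern \<kappa> 1) (\<lambda>i. t * cI I i)) (map (push I I (ukern \<kappa> 1)) (bas n \<iota>))
      = \<Theta> I (\<lambda>i. t * cI I i) (bas n \<iota>)"
    using cong_apply[OF C fI ne fI ne up mu0_Mplus[OF fI ne t]] bas_valid[OF r] by blast
  then show ?thesis unfolding pmu mb by simp
qed

lemma transfer:
  assumes C: "congruent_family n \<Theta>" and fI: "finite I" and ne: "I \<noteq> {}"
    and fJ: "finite J" and neJ: "J \<noteq> {}" and m: "m > 0" and c: "card J = card I * m" and t: "t > 0"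
    and b: "\<forall>W. length W = n \<and> set W \<subseteq> Sig J \<longrightarrow>
          \<Theta> J (\<lambda>i. t * cI J i) W = (\<Sum>P\<in>Part n. b P * tauP J P (\<lambda>i. t * cI J i) W)"
    and V: "length V = n" "set V \<subseteq> Sig I"
  shows "\<Theta> I (\<lambda>i. t * cI I i) V = (\<Sum>P\<in>Part n. b P * tauP I P (\<lambda>i. t * cI I i) V)"
proof -
  obtain \<kappa> where k: "\<forall>j\<in>J. \<kappa> j \<in> I" "\<forall>i\<in>I. card {j\<in>J. \<kappa> j = i} = m"
    using split_exists[OF fI fJ m c] by blast
  note up = ukern_props[OF fI fJ k m]
  let ?K = "ukern \<kappa> m"
  have pmu: "push I J ?K (\<lambda>i. t * cI I i) = (\<lambda>i. t * cI J i)" using ukern_cI[OF fI k(1) c] by simp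
  have mu: "(\<lambda>i. t * cI I i) \<in> Mplus I" by (rule mu0_Mplus[OF fI ne t])
  have W: "length (map (push I J ?K) V) = n \<and> set (map (push I J ?K) V) \<subseteq> Sig J"
    using V unfolding push_def Sig_def by auto
  have "\<Theta> I (\<lambda>i. t * cI I i) V = \<Theta> J (push I J ?K (\<lambda>i. t * cI I i)) (map (push I J ?K) V)"
    using cong_apply[OF C fI ne fJ neJ up mu V] by simp
  also have "\<dots> = (\<Sum>P\<in>Part n. b P * tauP J P (push I J ?K (\<lambda>i. t * cI I i)) (map (push I J ?K) V))"
    using b W unfolding pmu by blast
  also have "\<dots> = (\<Sum>P\<in>Part n. b P * tauP I P (\<lambda>i. t * cI I i) V)"
    by (rule sum.cong[OF refl]) (simp add: tauP_cong[OF _ V(1) up(1) fI fJ up(2) mu])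
  finally show ?thesis .
qed

lemma psi_congruent: "congruent_family n (\<lambda>I \<mu> V. \<Sum>P\<in>Part n. a P (norm1 I \<mu>) * tauP I P \<mu> V)"
  unfolding congruent_family_def
proof (intro allI impI ballI)
  fix I I' K \<mu> V
  assume H: "finite I \<and> I \<noteq> {} \<and> finite I' \<and> I' \<noteq> {} \<and> congruent_markov_kernel I I' K \<and> push I I' K ` Mplus I \<subseteq> Mplus I'"
    and mu: "\<mu> \<in> Mplus I" and V: "length V = n \<and> set V \<subseteq> Sig I"
  have nm: "norm1 I' (push I I' K \<mu>) = norm1 I \<mu>" using norm1_cong H mu by blast
  show "(\<Sum>P\<in>Part n. a P (norm1 I' (push I I' K \<mu>)) * tauP I' P (push I I' K \<mu>) (map (push I I' K) V)) =
        (\<Sum>P\<in>Part n. a P (norm1 I \<mu>) * tauP I P \<mu> V)"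
    unfolding nm by (rule sum.cong[OF refl]) (use tauP_cong H mu V in simp)
qed

theorem lemma4p7:
  fixes n :: nat
    and \<Theta> :: "nat set \<Rightarrow> (nat \<Rightarrow> real) \<Rightarrow> (nat \<Rightarrow> real) list \<Rightarrow> real"
  assumes "\<And>I. finite I \<Longrightarrow> I \<noteq> {} \<Longrightarrow> covariant_tensor_field n I (\<Theta> I)"
    and "congruent_family n \<Theta>"
  shows "\<exists>a :: nat set set \<Rightarrow> real \<Rightarrow> real.
     congruent_family n (\<lambda>I \<mu> V. \<Sum>P\<in>Part n. a P (norm1 I \<mu>) * tauP I P \<mu> V) \<and>
     (\<forall>I. finite I \<and> I \<noteq> {} \<longrightarrow> (\<forall>t>(0::real). \<forall>V. length V = n \<and> set V \<subseteq> Sig I \<longrightarrow>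
        \<Theta> I (\<lambda>i. t * cI I i) V
          - (\<Sum>P\<in>Part n. a P (norm1 I (\<lambda>i. t * cI I i)) * tauP I P (\<lambda>i. t * cI I i) V) = 0))"
proof -
  note CT = assms(1) and C = assms(2)
  have ML0: "mlin n I (\<Theta> I (\<lambda>i. t * cI I i))" if "finite I" "I \<noteq> {}" "t > 0" for I t
  proof -
    have "(\<lambda>i. t * cI I i) \<in> Mplus I" by (rule mu0_Mplus[OF that])
    then show ?thesis using CT[OF that(1,2)] unfolding covariant_tensor_field_def mlin_def by blast
  qed
  have EX: "\<exists>b. \<forall>V. length V = n \<and> set V \<subseteq> Sig I \<longrightarrow>
            \<Theta> I (\<lambda>i. t * cI I i) V = (\<Sum>P\<in>Part n. b P * tauP I P (\<lambda>i. t * cI I i) V)"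
    if "finite I" "I \<noteq> {}" "n \<le> card I" "t > 0" for I t
    by (rule exist_at[OF that ML0[OF that(1,2,4)]]) (rule pattern_inv[OF C that(1,2,4)])
  define I0 where "I0 = {0..<Suc n}"
  have fI0: "finite I0" and neI0: "I0 \<noteq> {}" and cI0: "card I0 = Suc n" unfolding I0_def by auto
  define A where "A s = (SOME b. \<forall>V. length V = n \<and> set V \<subseteq> Sig I0 \<longrightarrow>
        \<Theta> I0 (\<lambda>i. s * cI I0 i) V = (\<Sum>P\<in>Part n. b P * tauP I0 P (\<lambda>i. s * cI I0 i) V))" for s
  have A: "\<forall>V. length V = n \<and> set V \<subseteq> Sig I0 \<longrightarrow>
        \<Theta> I0 (\<lambda>i. s * cI I0 i) V = (\<Sum>P\<in>Part n. A s P * tauP I0 P (\<lambda>i. s * cI I0 i) V)" if s: "s > 0" for s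
  proof -
    have "\<exists>b. \<forall>V. length V = n \<and> set V \<subseteq> Sig I0 \<longrightarrow>
        \<Theta> I0 (\<lambda>i. s * cI I0 i) V = (\<Sum>P\<in>Part n. b P * tauP I0 P (\<lambda>i. s * cI I0 i) V)"
      using EX[OF fI0 neI0 _ s] cI0 by simp
    then show ?thesis unfolding A_def by (rule someI_ex)
  qed
  define a where "a P s = A s P" for P s
  show ?thesis
  proof (intro exI conjI allI impI)
    show "congruent_family n (\<lambda>I \<mu> V. \<Sum>P\<in>Part n. a P (norm1 I \<mu>) * tauP I P \<mu> V)"
      by (rule psi_congruent)
  next
    fix I t V
    assume I: "finite I \<and> I \<noteq> {}" and t: "t > (0::real)" and V: "length V = n \<and> set V \<subseteq> Sig I"
    have fI: "finite I" and ne: "I \<noteq> {}" using I by auto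
    have N: "card I \<ge> 1" using fI ne by (simp add: Suc_le_eq card_gt_0_iff)
    define J where "J = {0..<card I * Suc n}"
    have fJ: "finite J" and cJ: "card J = card I * Suc n" unfolding J_def by auto
    have neJ: "J \<noteq> {}" using N unfolding J_def by simp
    have nJ: "n \<le> card J" using N cJ by (metis mult_le_mono1 mult_1 le_SucI order_refl order_trans)
    obtain b where b: "\<forall>W. length W = n \<and> set W \<subseteq> Sig J \<longrightarrow>
          \<Theta> J (\<lambda>i. t * cI J i) W = (\<Sum>P\<in>Part n. b P * tauP J P (\<lambda>i. t * cI J i) W)"
      using EX[OF fJ neJ nJ t] by blast
    have TI: "\<Theta> I (\<lambda>i. t * cI I i) V = (\<Sum>P\<in>Part n. b P * tauP I P (\<lambda>i. t * cI I i) V)"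
      by (rule transfer[OF C fI ne fJ neJ _ cJ t b]) (use V in auto)
    have cJ0: "card J = card I0 * card I" using cJ cI0 by simp
    have posI: "card I > 0" using N by simp
    have T0: "\<forall>W. length W = n \<and> set W \<subseteq> Sig I0 \<longrightarrow>
        \<Theta> I0 (\<lambda>i. t * cI I0 i) W = (\<Sum>P\<in>Part n. b P * tauP I0 P (\<lambda>i. t * cI I0 i) W)"
      using transfer[OF C fI0 neI0 fJ neJ posI cJ0 t b] by blast
    have eqA: "\<forall>P\<in>Part n. A t P = b P"
      by (rule uniq_at[OF fI0 neI0 _ t]) (use A[OF t] T0 cI0 in auto)
    have "(\<Sum>P\<in>Part n. a P (norm1 I (\<lambda>i. t * cI I i)) * tauP I P (\<lambda>i. t * cI I i) V)
        = (\<Sum>P\<in>Part n. b P * tauP I P (\<lambda>i. t * cI I i) V)"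
      unfolding norm1_mu0[OF fI ne t] a_def by (rule sum.cong[OF refl]) (use eqA in simp)
    then show "\<Theta> I (\<lambda>i. t * cI I i) V
          - (\<Sum>P\<in>Part n. a P (norm1 I (\<lambda>i. t * cI I i)) * tauP I P (\<lambda>i. t * cI I i) V) = 0"
      using TI by simp
  qed
qed

end
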